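(* For $|q|<1$, \begin{align*} \sum_{r=-\infty}^{\infty}\frac{q^{4r^2}}{(-q^2;q^2)_{2r}}&=\frac{(q^2;q^2)_{\infty}}{2}\left[(q;q^2)^3_{\infty}+(-q;q^2)^3_{\infty}\right],\\ \sum_{r=-\infty}^{\infty}\frac{q^{4r^2+4r}}{(-q^2;q^2)_{2r+1}}&=\frac{(q^2;q^2)_{\infty}}{2q}\left[(-q;q^2)^3_{\infty}-(q;q^2)^3_{\infty}\right],\\ \sum_{r=-\infty}^{\infty}(8r+1)q^{8r^2+2r}&=\frac{(q^2;q^2)^3_{\infty}}{2}\left[(q;q^2)^3_{\infty}+(-q;q^2)^3_{\infty}\right],\\ \sum_{r=-\infty}^{\infty}(8r+3)q^{8r^2+6r}&=\frac{(q^2;q^2)^3_{\infty}}{2q}\left[(-q;q^2)^3_{\infty}-(q;q^2)^3_{\infty}\right]. \end{align*}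
   Context: For $n\ge 0$, $(a;q)_n=\prod_{j=0}^{n-1}(1-aq^j)$, $(a;q)_\infty=\prod_{j\ge0}(1-aq^j)$, and for negative index $(a;q)_{-n}=1/(aq^{-n};q)_n$. *)

theory Defs
  imports "HOL-Analysis.Analysis"
begin

definition qpoch :: "complex \<Rightarrow> complex \<Rightarrow> nat \<Rightarrow> complex" where
  "qpoch a q n = (\<Prod>j<n. (1 - a * q ^ j))"

definition qpochZ :: "complex \<Rightarrow> complex \<Rightarrow> int \<Rightarrow> complex" where
  "qpochZ a q k = (if 0 \<le> k then qpoch a q (nat k)
                   else 1 / qpoch (a * q powi k) q (nat (- k)))"

definition qpoch_inf :: "complex \<Rightarrow> complex \<Rightarrow> complex" where
  "qpoch_inf a q = lim (\<lambda>n. qpoch a q n)"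

end

theory Submission
  imports Defs
begin

lemma qpoch_Suc: "qpoch a p (Suc n) = qpoch a p n * (1 - a * p ^ n)"
  by (simp add: qpoch_def)

lemma qpoch_0[simp]: "qpoch a p 0 = 1"
  by (simp add: qpoch_def)

lemma qpoch_nonzero:
  assumes "norm a < 1" "norm p \<le> 1"
  shows "qpoch a p n \<noteq> 0"
proof -
  have "1 - a * p ^ j \<noteq> 0" for j
  proof
    assume "1 - a * p ^ j = 0"
    hence "a * p ^ j = 1" by simp
    hence "norm (a * p ^ j) = 1" by simp
    moreover have "norm (a * p ^ j) \<le> norm a"
      using assms by (simp add: norm_mult norm_power mult_left_le power_le_one)
    ultimately show False using assms by simp
  qed
  thus ?thesis by (simp add: qpoch_def)
qed

lemma tri_Suc: "Suc k * (Suc k - 1) div 2 = k * (k - 1) div 2 + k"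
proof -
  have "Suc k * k = k * (k - 1) + 2 * k" by (cases k) (auto simp: algebra_simps)
  thus ?thesis by simp
qed

definition ec :: "complex \<Rightarrow> nat \<Rightarrow> complex" where
  "ec p k = (-1) ^ k * p ^ (k * (k - 1) div 2) / qpoch p p k"

definition ep :: "complex \<Rightarrow> complex \<Rightarrow> complex" where
  "ep p z = (\<Sum>k. ec p k * z ^ k)"

lemma ec_Suc: "ec p (Suc k) = ec p k * (-(p ^ k) / (1 - p * p ^ k))"
proof -
  have e: "p ^ (Suc k * (Suc k - 1) div 2) = p ^ (k * (k - 1) div 2) * p ^ k"
    by (simp only: tri_Suc power_add)
  show ?thesis unfolding ec_def qpoch_Suc e by (simp add: field_simps)
qed

lemma one_minus_bound:
  fixes p :: complex
  assumes "norm p < 1"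
  shows "norm (1 - p * p ^ k) \<ge> 1 - norm p"
proof -
  have "norm p ^ k \<le> 1" using assms by (simp add: power_le_one)
  hence "norm p * norm p ^ k \<le> norm p * 1" by (intro mult_left_mono) auto
  hence "norm (p * p ^ k) \<le> norm p"
    by (simp add: norm_mult norm_power)
  moreover have "norm (1 - p * p ^ k) \<ge> 1 - norm (p * p ^ k)"
    using norm_triangle_ineq2[of 1 "p * p ^ k"] by simp
  ultimately show ?thesis by linarith
qed

lemma ec_summable:
  assumes "norm p < 1"
  shows "summable (\<lambda>k. norm (ec p k * z ^ k))"
proof -
  have "(\<lambda>k. norm p ^ k * norm z) \<longlonglongrightarrow> 0 * norm z"
    by (intro tendsto_intros) (use assms in \<open>simp add: LIMSEQ_power_zero\<close>)
  hence "\<forall>\<^sub>F k in sequentially. norm p ^ k * norm z < (1 - norm p) / 2"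
    using assms by (intro order_tendstoD) auto
  then obtain N where N: "\<And>k. k \<ge> N \<Longrightarrow> norm p ^ k * norm z < (1 - norm p) / 2"
    by (auto simp: eventually_sequentially)
  show ?thesis
  proof (rule summable_ratio_test[of "1/2" N])
    fix k assume k: "k \<ge> N"
    have b: "norm (1 - p * p ^ k) \<ge> 1 - norm p" by (rule one_minus_bound[OF assms])
    have pos: "1 - norm p > 0" using assms by simp
    have pos2: "norm (1 - p * p ^ k) > 0" using b pos by linarith
    have "norm (ec p (Suc k) * z ^ Suc k) = norm (ec p k * z ^ k) * (norm p ^ k * norm z / norm (1 - p * p ^ k))"
      using pos2 by (simp add: ec_Suc norm_mult norm_divide norm_power field_simps)
    also have "\<dots> \<le> norm (ec p k * z ^ k) * (1/2)"
    proof (rule mult_left_mono)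
      have "norm p ^ k * norm z / norm (1 - p * p ^ k) \<le> norm p ^ k * norm z / (1 - norm p)"
        using b pos pos2 by (intro divide_left_mono) auto
      also have "\<dots> \<le> 1/2" using N[OF k] pos by (simp add: field_simps)
      finally show "norm p ^ k * norm z / norm (1 - p * p ^ k) \<le> 1/2" .
    qed simp
    finally show "norm (norm (ec p (Suc k) * z ^ Suc k)) \<le> 1/2 * norm (norm (ec p k * z ^ k))"
      by simp
  qed simp
qed


lemma ec_0[simp]: "ec p 0 = 1" by (simp add: ec_def)

lemma ec_summable':
  assumes "norm p < 1" shows "summable (\<lambda>k. ec p k * z ^ k)"
  by (rule summable_norm_cancel[OF ec_summable[OF assms]])

lemma ep_sums: assumes "norm p < 1" shows "(\<lambda>k. ec p k * z ^ k) sums ep p z"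
  using ec_summable'[OF assms] by (simp add: ep_def summable_sums)

lemma pk_ne1: fixes p :: complex assumes "norm p < 1" shows "1 - p * p ^ k \<noteq> 0"
proof
  assume "1 - p * p ^ k = 0"
  hence "norm (1 - p * p ^ k) = 0" by simp
  with one_minus_bound[OF assms, of k] assms show False by linarith
qed

lemma ep_funeq:
  assumes p: "norm p < 1"
  shows "ep p z = (1 - z) * ep p (p * z)"
proof -
  let ?u = "\<lambda>k. ec p k * z ^ k" and ?v = "\<lambda>k. ec p k * (p * z) ^ k"
  have su: "?u sums ep p z" and sv: "?v sums ep p (p * z)" using ep_sums[OF p] by auto
  have d: "(\<lambda>k. ?u k - ?v k) sums (ep p z - ep p (p * z))" by (intro sums_diff su sv)
  have "(\<lambda>j. ?u (Suc j) - ?v (Suc j)) = (\<lambda>j. - z * ?v j)"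
  proof
    fix j
    have ne: "1 - p * p ^ j \<noteq> 0" by (rule pk_ne1[OF p])
    have "?u (Suc j) - ?v (Suc j) = ec p (Suc j) * (1 - p * p ^ j) * z ^ Suc j"
      by (simp only: power_mult_distrib power_Suc) (simp add: algebra_simps)
    also have "\<dots> = ec p j * (-(p ^ j)) * z ^ Suc j"
      using ne by (simp add: ec_Suc)
    also have "\<dots> = - z * ?v j" by (simp only: power_mult_distrib power_Suc) (simp add: algebra_simps)
    finally show "?u (Suc j) - ?v (Suc j) = - z * ?v j" .
  qed
  moreover have "(\<lambda>j. - z * ?v j) sums (- z * ep p (p * z))" by (intro sums_mult sv)
  ultimately have "(\<lambda>j. ?u (Suc j) - ?v (Suc j)) sums (- z * ep p (p * z))" by simp
  hence "(\<lambda>k. ?u k - ?v k) sums (- z * ep p (p * z) + (?u 0 - ?v 0))"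
    by (subst (asm) sums_Suc_iff)
  from sums_unique2[OF d this] have "ep p z - ep p (p * z) = - z * ep p (p * z)" by simp
  thus ?thesis by (simp add: algebra_simps)
qed

lemma ep_iter:
  assumes p: "norm p < 1"
  shows "qpoch z p N * ep p (p ^ N * z) = ep p z"
proof (induction N)
  case 0 then show ?case by simp
next
  case (Suc N)
  have "ep p (p ^ N * z) = (1 - p ^ N * z) * ep p (p * (p ^ N * z))" by (rule ep_funeq[OF p])
  have "qpoch z p (Suc N) * ep p (p ^ Suc N * z) = qpoch z p N * ((1 - p ^ N * z) * ep p (p * (p ^ N * z)))"
    by (simp add: qpoch_Suc mult.assoc mult.left_commute mult.commute)
  also have "\<dots> = ep p z" using Suc by (simp only: ep_funeq[OF p, symmetric])
  finally show ?case .
qed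

lemma ep_zero[simp]: "ep p 0 = 1"
  unfolding ep_def using powser_zero[of "ec p"] by simp

lemma ep_isCont: assumes "norm p < 1" shows "isCont (ep p) x"
proof -
  have "isCont (\<lambda>x. \<Sum>n. ec p n * x ^ n) x"
    by (rule isCont_powser_converges_everywhere) (rule ec_summable'[OF assms])
  thus ?thesis unfolding ep_def[abs_def] .
qed

lemma qpoch_tendsto:
  assumes p: "norm p < 1"
  shows "(\<lambda>N. qpoch z p N) \<longlonglongrightarrow> ep p z"
proof -
  have "(\<lambda>N. p ^ N * z) \<longlonglongrightarrow> 0 * z"
    by (intro tendsto_intros) (use p in \<open>simp add: LIMSEQ_power_zero\<close>)
  hence t0: "(\<lambda>N. p ^ N * z) \<longlonglongrightarrow> 0" by simp
  have t1: "(\<lambda>N. ep p (p ^ N * z)) \<longlonglongrightarrow> 1"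
    using isCont_tendsto_compose[OF ep_isCont[OF p] t0] by simp
  have ev: "\<forall>\<^sub>F N in sequentially. ep p (p ^ N * z) \<noteq> 0"
    using tendsto_imp_eventually_ne[OF t1] by simp
  have "(\<lambda>N. ep p z / ep p (p ^ N * z)) \<longlonglongrightarrow> ep p z / 1"
    by (intro tendsto_intros t1) simp
  hence t2: "(\<lambda>N. ep p z / ep p (p ^ N * z)) \<longlonglongrightarrow> ep p z" by simp
  show ?thesis
  proof (rule Lim_transform_eventually[OF t2])
    show "\<forall>\<^sub>F N in sequentially. ep p z / ep p (p ^ N * z) = qpoch z p N"
      using ev
    proof (rule eventually_mono)
      fix N assume "ep p (p ^ N * z) \<noteq> 0"
      thus "ep p z / ep p (p ^ N * z) = qpoch z p N"
        using ep_iter[OF p, of z N] by (simp add: field_simps)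
    qed
  qed
qed

lemma qpoch_inf_ep: assumes "norm p < 1" shows "qpoch_inf z p = ep p z"
  unfolding qpoch_inf_def using qpoch_tendsto[OF assms] by (rule limI)


definition eh :: "complex \<Rightarrow> complex \<Rightarrow> complex" where
  "eh p z = (\<Sum>k. inverse (qpoch p p k) * z ^ k)"

lemma eh_summable:
  assumes p: "norm p < 1" and z: "norm z < 1"
  shows "summable (\<lambda>k. norm (inverse (qpoch p p k) * z ^ k))"
proof -
  define c where "c = (1 + norm z) / 2"
  have c1: "c < 1" and cz: "norm z < c" using z by (auto simp: c_def)
  have "(\<lambda>k. c * (1 - norm p ^ k)) \<longlonglongrightarrow> c * (1 - 0)"
    by (intro tendsto_intros) (use p in \<open>simp add: LIMSEQ_power_zero\<close>)
  hence "\<forall>\<^sub>F k in sequentially. norm z < c * (1 - norm p ^ k)"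
    using cz by (intro order_tendstoD) auto
  then obtain N where N: "\<And>k. k \<ge> N \<Longrightarrow> norm z < c * (1 - norm p ^ k)"
    by (auto simp: eventually_sequentially)
  show ?thesis
  proof (rule summable_ratio_test[of c N])
    fix k assume k: "k \<ge> N"
    have "norm (p * p ^ k) = norm p * norm p ^ k" by (simp add: norm_mult norm_power)
    also have "\<dots> \<le> norm p ^ k" using p by (intro mult_left_le_one_le) auto
    finally have a: "norm (p * p ^ k) \<le> norm p ^ k" .
    have "norm (1 - p * p ^ k) \<ge> 1 - norm (p * p ^ k)"
      using norm_triangle_ineq2[of 1 "p * p ^ k"] by simp
    hence b: "norm (1 - p * p ^ k) \<ge> 1 - norm p ^ k" using a by linarith
    have "norm z \<le> c * norm (1 - p * p ^ k)"
      using N[OF k] b c1 cz by (smt (verit) mult_left_mono norm_ge_zero)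
    hence "norm z / norm (1 - p * p ^ k) \<le> c"
      using pk_ne1[OF p, of k] by (simp add: divide_le_eq)
    moreover have "norm (inverse (qpoch p p (Suc k)) * z ^ Suc k) =
      norm (inverse (qpoch p p k) * z ^ k) * (norm z / norm (1 - p * p ^ k))"
      by (simp add: qpoch_Suc norm_mult norm_power norm_inverse inverse_mult_distrib divide_inverse mult_ac)
    ultimately have "norm (inverse (qpoch p p (Suc k)) * z ^ Suc k) \<le> norm (inverse (qpoch p p k) * z ^ k) * c"
      by (metis mult_left_mono norm_ge_zero)
    thus "norm (norm (inverse (qpoch p p (Suc k)) * z ^ Suc k)) \<le> c * norm (norm (inverse (qpoch p p k) * z ^ k))"
      by (simp add: mult.commute)
  qed (rule c1)
qed

lemma eh_sums: assumes "norm p < 1" "norm z < 1"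
  shows "(\<lambda>k. inverse (qpoch p p k) * z ^ k) sums eh p z"
  unfolding eh_def by (rule summable_sums[OF summable_norm_cancel[OF eh_summable[OF assms]]])

lemma eh_funeq:
  assumes p: "norm p < 1" and z: "norm z < 1"
  shows "(1 - z) * eh p z = eh p (p * z)"
proof -
  have "norm p * norm z \<le> 1 * norm z" using p by (intro mult_right_mono) auto
  hence pz: "norm (p * z) < 1" using z by (simp add: norm_mult)
  let ?u = "\<lambda>k. inverse (qpoch p p k) * z ^ k" and ?v = "\<lambda>k. inverse (qpoch p p k) * (p * z) ^ k"
  have su: "?u sums eh p z" and sv: "?v sums eh p (p * z)" using eh_sums[OF p] z pz by auto
  have d: "(\<lambda>k. ?v k - ?u k) sums (eh p (p * z) - eh p z)" by (intro sums_diff su sv)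
  have "(\<lambda>j. ?v (Suc j) - ?u (Suc j)) = (\<lambda>j. - z * ?u j)"
  proof
    fix j
    have ne: "1 - p * p ^ j \<noteq> 0" by (rule pk_ne1[OF p])
    have ne2: "qpoch p p j \<noteq> 0" using p by (intro qpoch_nonzero) auto
    have "?v (Suc j) - ?u (Suc j) = inverse (qpoch p p j) * inverse (1 - p * p ^ j) * (p * p ^ j - 1) * z ^ Suc j"
      by (simp only: power_mult_distrib power_Suc qpoch_Suc inverse_mult_distrib) (simp add: algebra_simps)
    also have "\<dots> = - z * ?u j" using ne ne2 by (simp add: field_simps)
    finally show "?v (Suc j) - ?u (Suc j) = - z * ?u j" .
  qed
  moreover have "(\<lambda>j. - z * ?u j) sums (- z * eh p z)" by (intro sums_mult su)
  ultimately have "(\<lambda>j. ?v (Suc j) - ?u (Suc j)) sums (- z * eh p z)" by simp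
  hence "(\<lambda>k. ?v k - ?u k) sums (- z * eh p z + (?v 0 - ?u 0))"
    by (subst (asm) sums_Suc_iff)
  from sums_unique2[OF d this] have "eh p (p * z) - eh p z = - z * eh p z" by simp
  thus ?thesis by (simp add: algebra_simps)
qed

lemma norm_pN: fixes p z :: complex assumes "norm p < 1" "norm z < 1" shows "norm (p ^ N * z) < 1"
proof -
  have "norm (p ^ N) \<le> 1" using assms by (simp add: norm_power power_le_one)
  hence "norm (p ^ N) * norm z \<le> 1 * norm z" by (intro mult_right_mono) auto
  thus ?thesis using assms by (simp add: norm_mult)
qed

lemma eh_iter:
  assumes p: "norm p < 1" and z: "norm z < 1"
  shows "qpoch z p N * eh p z = eh p (p ^ N * z)"
proof (induction N)
  case 0 then show ?case by simp
next
  case (Suc N)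
  have "qpoch z p (Suc N) * eh p z = (1 - p ^ N * z) * (qpoch z p N * eh p z)"
    by (simp add: qpoch_Suc mult.assoc mult.left_commute mult.commute)
  also have "\<dots> = (1 - p ^ N * z) * eh p (p ^ N * z)" using Suc by simp
  also have "\<dots> = eh p (p * (p ^ N * z))" by (rule eh_funeq[OF p norm_pN[OF p z]])
  finally show ?case by (simp add: mult.assoc)
qed

lemma eh_zero[simp]: "eh p 0 = 1"
  unfolding eh_def using powser_zero[of "\<lambda>k. inverse (qpoch p p k)"] by simp

lemma eh_isCont0: assumes p: "norm p < 1" shows "isCont (eh p) 0"
proof -
  have "summable (\<lambda>k. inverse (qpoch p p k) * (1/2) ^ k)"
    by (rule summable_norm_cancel[OF eh_summable[OF p]]) simp
  hence "isCont (\<lambda>x. \<Sum>n. inverse (qpoch p p n) * x ^ n) 0"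
    by (rule isCont_powser) simp
  thus ?thesis unfolding eh_def[abs_def] .
qed

lemma ep_eh:
  assumes p: "norm p < 1" and z: "norm z < 1"
  shows "ep p z * eh p z = 1"
proof -
  have "(\<lambda>N. p ^ N * z) \<longlonglongrightarrow> 0 * z"
    by (intro tendsto_intros) (use p in \<open>simp add: LIMSEQ_power_zero\<close>)
  hence t0: "(\<lambda>N. p ^ N * z) \<longlonglongrightarrow> 0" by simp
  have "(\<lambda>N. eh p (p ^ N * z)) \<longlonglongrightarrow> eh p 0"
    by (rule isCont_tendsto_compose[OF eh_isCont0[OF p] t0])
  hence t1: "(\<lambda>N. qpoch z p N * eh p z) \<longlonglongrightarrow> 1"
    using eh_iter[OF p z] by simp
  have t2: "(\<lambda>N. qpoch z p N * eh p z) \<longlonglongrightarrow> ep p z * eh p z"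
    by (intro tendsto_intros qpoch_tendsto[OF p])
  show ?thesis using LIMSEQ_unique[OF t2 t1] .
qed

lemma ep_nonzero: assumes "norm p < 1" "norm z < 1" shows "ep p z \<noteq> 0"
  using ep_eh[OF assms] by auto

lemma eh_eq: assumes "norm p < 1" "norm z < 1" shows "eh p z = 1 / ep p z"
  using ep_eh[OF assms] ep_nonzero[OF assms] by (simp add: field_simps)

lemma int_split_has_sum:
  fixes f :: "int \<Rightarrow> 'a::topological_comm_monoid_add"
  assumes "((\<lambda>n::nat. f (int n)) has_sum A) UNIV" "((\<lambda>n::nat. f (- int n - 1)) has_sum B) UNIV"
  shows "(f has_sum (A + B)) UNIV"
proof -
  have i1: "inj (\<lambda>n::nat. int n)" by (simp add: inj_on_def)
  have i2: "inj (\<lambda>n::nat. - int n - 1)" by (simp add: inj_on_def)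
  have a: "(f has_sum A) (range int)"
    using assms(1) has_sum_reindex[OF i1, of f A] by (simp add: o_def)
  have b: "(f has_sum B) (range (\<lambda>n::nat. - int n - 1))"
    using assms(2) has_sum_reindex[OF i2, of f B] by (simp add: o_def)
  have u: "range int \<union> range (\<lambda>n::nat. - int n - 1) = UNIV"
  proof (rule set_eqI, rule iffI)
    fix x :: int
    show "x \<in> range int \<union> range (\<lambda>n::nat. - int n - 1)"
    proof (cases "x \<ge> 0")
      case True thus ?thesis by (metis UnI1 nonneg_int_cases rangeI)
    next
      case False
      hence "x = - int (nat (- x - 1)) - 1" by simp
      thus ?thesis by (metis UnI2 rangeI)
    qed
  qed simp
  have d: "range int \<inter> range (\<lambda>n::nat. - int n - 1) = {}" by auto
  show ?thesis using has_sum_Un_disjoint[OF a b d] u by simp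
qed

lemma int_split_summable:
  fixes f :: "int \<Rightarrow> real"
  assumes "summable (\<lambda>n::nat. norm (f (int n)))" "summable (\<lambda>n::nat. norm (f (- int n - 1)))"
  shows "f summable_on UNIV"
proof -
  have "((\<lambda>n::nat. f (int n)) has_sum (\<Sum>n. f (int n))) UNIV"
    by (rule norm_summable_imp_has_sum[OF assms(1)]) (rule summable_sums[OF summable_norm_cancel[OF assms(1)]])
  moreover have "((\<lambda>n::nat. f (- int n - 1)) has_sum (\<Sum>n. f (- int n - 1))) UNIV"
    by (rule norm_summable_imp_has_sum[OF assms(2)]) (rule summable_sums[OF summable_norm_cancel[OF assms(2)]])
  ultimately show ?thesis using int_split_has_sum by (metis summable_on_def)
qed

lemma gauss_summable:
  fixes r R :: real
  assumes "0 \<le> r" "r < 1" "0 \<le> R"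
  shows "summable (\<lambda>n::nat. R ^ n * r ^ (n * n))"
proof -
  have "(\<lambda>n. R * r * r ^ n * r ^ n) \<longlonglongrightarrow> R * r * 0 * 0"
    by (intro tendsto_intros) (use assms in \<open>simp_all add: LIMSEQ_power_zero\<close>)
  hence "\<forall>\<^sub>F n in sequentially. R * r * r ^ n * r ^ n < 1/2"
    by (intro order_tendstoD) auto
  then obtain N where N: "\<And>n. n \<ge> N \<Longrightarrow> R * r * r ^ n * r ^ n < 1/2"
    by (auto simp: eventually_sequentially)
  show ?thesis
  proof (rule summable_ratio_test[of "1/2" N])
    fix n assume n: "n \<ge> N"
    have e: "R ^ Suc n * r ^ (Suc n * Suc n) = (R ^ n * r ^ (n * n)) * (R * r * r ^ n * r ^ n)"
      by (simp add: power_add algebra_simps)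
    have nn: "0 \<le> R ^ n * r ^ (n * n)" using assms by simp
    have "norm (R ^ Suc n * r ^ (Suc n * Suc n)) = R ^ Suc n * r ^ (Suc n * Suc n)" using assms by simp
    also have "\<dots> = R ^ n * r ^ (n * n) * (R * r * r ^ n * r ^ n)" by (rule e)
    also have "\<dots> \<le> R ^ n * r ^ (n * n) * (1/2)"
      using N[OF n] nn by (intro mult_left_mono) auto
    also have "\<dots> = 1/2 * norm (R ^ n * r ^ (n * n))" using nn by simp
    finally show "norm (R ^ Suc n * r ^ (Suc n * Suc n)) \<le> 1/2 * norm (R ^ n * r ^ (n * n))" .
  qed simp
qed

lemma DS:
  fixes a :: "int \<Rightarrow> complex" and b :: "nat \<Rightarrow> complex"
  assumes na: "(\<lambda>M. norm (a M)) summable_on UNIV" and nb: "(\<lambda>k. norm (b k)) summable_on UNIV"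
    and ha: "(a has_sum A) UNIV" and hb: "(b has_sum B) UNIV"
    and hs: "\<And>n. ((\<lambda>k. a (n + int k) * b k) has_sum s n) UNIV"
  shows "(s has_sum (A * B)) UNIV"
proof -
  define g where "g = (\<lambda>(M::int, k::nat). a M * b k)"
  have gs: "g summable_on (Sigma UNIV (\<lambda>_. UNIV))"
  proof (rule abs_summable_summable)
    show "(\<lambda>x. norm (g x)) summable_on Sigma UNIV (\<lambda>_. UNIV)"
    proof (rule Infinite_Sum.abs_summable_on_Sigma_iff[THEN iffD2], intro conjI ballI)
      fix M :: int
      show "(\<lambda>y. norm (g (M, y))) summable_on UNIV"
        unfolding g_def using summable_on_cmult_right[OF nb, of "norm (a M)"] by (simp add: norm_mult)
    next
      have nn: "infsum (\<lambda>y. norm (b y)) UNIV \<ge> 0" by (rule infsum_nonneg) simp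
      have "(\<lambda>x. norm (infsum (\<lambda>y. norm (g (x, y))) UNIV)) = (\<lambda>x. norm (a x) * infsum (\<lambda>y. norm (b y)) UNIV)"
        unfolding g_def using nn by (simp add: norm_mult infsum_cmult_right' abs_mult)
      thus "(\<lambda>x. norm (infsum (\<lambda>y. norm (g (x, y))) UNIV)) summable_on UNIV"
        using summable_on_cmult_left[OF na, of "infsum (\<lambda>y. norm (b y)) UNIV"]
        by simp
    qed
  qed
  have gh: "(g has_sum (A * B)) (Sigma UNIV (\<lambda>_. UNIV))"
  proof (rule has_sum_SigmaI[where g = "\<lambda>M. a M * B"])
    fix M :: int show "((\<lambda>y. g (M, y)) has_sum a M * B) UNIV"
      unfolding g_def using has_sum_cmult_right[OF hb, of "a M"] by simp
  next
    show "((\<lambda>M. a M * B) has_sum A * B) UNIV" by (rule has_sum_cmult_left[OF ha])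
  qed (rule gs)
  define f where "f = (\<lambda>(n::int, k::nat). a (n + int k) * b k)"
  have fh: "(f has_sum (A * B)) (Sigma UNIV (\<lambda>_. UNIV))"
  proof -
    have "(f has_sum (A * B)) (Sigma UNIV (\<lambda>_. UNIV)) = (g has_sum (A * B)) (Sigma UNIV (\<lambda>_. UNIV))"
      by (rule has_sum_reindex_bij_witness[where j = "\<lambda>(n, k). (n + int k, k)" and i = "\<lambda>(M, k). (M - int k, k)"])
        (auto simp: f_def g_def)
    thus ?thesis using gh by simp
  qed
  show ?thesis
    by (rule has_sum_SigmaD[OF fh]) (use hs in \<open>simp add: f_def\<close>)
qed

lemma powi_comb: fixes x :: complex shows "x \<noteq> 0 \<Longrightarrow> x powi a * x powi b = x powi (a + b)"
  by (simp add: power_int_add)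

lemma powi_neg1: fixes x :: "'a::field" shows "x powi (- int n - 1) = inverse x ^ Suc n"
proof -
  have e: "- int n - 1 = - int (Suc n)" by simp
  show ?thesis unfolding e power_int_minus power_int_of_nat power_inverse ..
qed

lemma even_kk: "even (k * (k - 1::nat))"
  by (cases k) auto

lemma p_tri: fixes q :: complex shows "(q^2) ^ (k * (k - 1) div 2) = q ^ (k * (k - 1))"
proof -
  have "k * (k - 1) = 2 * (k * (k - 1) div 2)" using even_kk[of k] by simp
  hence "q ^ (k * (k - 1)) = (q ^ 2) ^ (k * (k - 1) div 2)" by (metis power_mult)
  thus ?thesis by simp
qed

definition theta :: "complex \<Rightarrow> complex \<Rightarrow> complex" where
  "theta q z = infsum (\<lambda>M::int. z powi M * q powi (M^2)) UNIV"

lemma theta_abs_summable: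
  fixes q z :: complex
  assumes q: "norm q < 1"
  shows "(\<lambda>M::int. norm (z powi M * q powi (M^2))) summable_on UNIV"
proof (rule int_split_summable)
  have "summable (\<lambda>n. norm z ^ n * norm q ^ (n * n))"
    by (rule gauss_summable) (use q in auto)
  thus "summable (\<lambda>n. norm (norm (z powi int n * q powi (int n)\<^sup>2)))"
    by (simp add: norm_mult norm_power power2_eq_square flip: of_nat_mult)
next
  have "summable (\<lambda>n. inverse (norm z) ^ n * norm q ^ (n * n))"
    by (rule gauss_summable) (use q in auto)
  hence "summable (\<lambda>n. inverse (norm z) ^ Suc n * norm q ^ (Suc n * Suc n))"
    by (subst summable_Suc_iff)
  moreover have "norm (norm (z powi (- int n - 1) * q powi (- int n - 1)\<^sup>2)) = inverse (norm z) ^ Suc n * norm q ^ (Suc n * Suc n)" for n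
  proof -
    have sq: "(- int n - 1)^2 = int (Suc n * Suc n)" by (simp add: power2_eq_square algebra_simps)
    show ?thesis by (simp only: sq powi_neg1 power_int_of_nat) (simp add: norm_mult norm_power norm_inverse)
  qed
  ultimately show "summable (\<lambda>n. norm (norm (z powi (- int n - 1) * q powi (- int n - 1)\<^sup>2)))"
    by simp
qed

lemma theta_has_sum:
  fixes q z :: complex assumes q: "norm q < 1"
  shows "((\<lambda>M::int. z powi M * q powi (M^2)) has_sum theta q z) UNIV"
  unfolding theta_def by (rule has_sum_infsum, rule abs_summable_summable, rule theta_abs_summable[OF q])

lemma ep_has_sum: assumes "norm p < 1" shows "((\<lambda>k. ec p k * z ^ k) has_sum ep p z) UNIV"
  by (rule norm_summable_imp_has_sum[OF ec_summable[OF assms] ep_sums[OF assms]])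

lemma eh_has_sum: assumes "norm p < 1" "norm z < 1"
  shows "((\<lambda>k. inverse (qpoch p p k) * z ^ k) has_sum eh p z) UNIV"
  by (rule norm_summable_imp_has_sum[OF eh_summable[OF assms] eh_sums[OF assms]])

lemma eh_abs: assumes "norm p < 1" "norm z < 1"
  shows "(\<lambda>k. norm (inverse (qpoch p p k) * z ^ k)) summable_on UNIV"
  by (rule norm_summable_imp_summable_on) (use eh_summable[OF assms] in simp)

lemma ep_negpow_zero:
  fixes p :: complex assumes p: "norm p < 1" "p \<noteq> 0"
  shows "ep p (p powi (- int m)) = 0"
proof -
  have "qpoch (p powi (- int m)) p (Suc m) = 0"
    using p by (simp add: qpoch_Suc power_int_minus)
  moreover have "qpoch (p powi (- int m)) p (Suc m) * ep p (p ^ Suc m * p powi (- int m)) = ep p (p powi (- int m))"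
    by (rule ep_iter[OF p(1)])
  ultimately show ?thesis by simp
qed

lemma term_id:
  fixes q z :: complex and n :: int and k :: nat
  assumes q: "q \<noteq> 0" and z: "z \<noteq> 0"
  shows "z powi (n + int k) * q powi ((n + int k)^2) * (inverse (qpoch (q^2) (q^2) k) * (- q / z) ^ k)
       = z powi n * q powi (n^2) * (ec (q^2) k * ((q^2) powi (n + 1)) ^ k)"
proof -
  have zz: "z powi (n + int k) * inverse z ^ k = z powi n"
    using z by (simp add: power_int_add power_inverse)
  have i2: "int (k * (k - 1)) = int k * (int k - 1)" by (cases k) (simp_all add: algebra_simps)
  have r2: "q ^ (k * (k - 1)) = q powi (int k * (int k - 1))"
  proof -
    have "q powi (int k * (int k - 1)) = q powi (int (k * (k - 1)))" by (simp only: i2)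
    thus ?thesis by (simp only: power_int_of_nat)
  qed
  have r3: "((q^2) powi (n + 1)) ^ k = q powi (2 * (n + 1) * int k)"
  proof -
    have "(q^2) powi (n+1) = q powi (2*(n+1))" using power_int_power[of q 2 "n+1"] by simp
    hence "((q^2) powi (n + 1)) ^ k = (q powi (2*(n+1))) powi int k" by simp
    also have "\<dots> = q powi (2 * (n + 1) * int k)" by (rule power_int_mult[symmetric])
    finally show ?thesis .
  qed
  have qq: "q powi ((n + int k)^2) * q ^ k = q powi (n^2) * q ^ (k * (k - 1)) * ((q^2) powi (n + 1)) ^ k"
  proof -
    have "q powi ((n + int k)^2) * q ^ k = q powi ((n + int k)^2 + int k)"
      using q by (simp add: powi_comb flip: power_int_of_nat)
    also have "(n + int k)^2 + int k = n^2 + int k * (int k - 1) + 2 * (n + 1) * int k"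
      by (simp add: power2_eq_square algebra_simps)
    also have "q powi \<dots> = q powi (n^2) * q powi (int k * (int k - 1)) * q powi (2 * (n + 1) * int k)"
      using q by (simp add: powi_comb)
    finally show ?thesis by (simp only: r2 r3)
  qed
  have mq: "- q / z = (-1) * q * inverse z" by (simp add: divide_inverse)
  have mqk: "(- q / z) ^ k = (-1) ^ k * q ^ k * inverse z ^ k"
    by (simp only: mq power_mult_distrib)
  have ecq: "ec (q^2) k = (-1)^k * q^(k*(k-1)) * inverse (qpoch (q^2) (q^2) k)"
    by (simp only: ec_def p_tri divide_inverse)
  have "z powi (n + int k) * q powi ((n + int k)^2) * (inverse (qpoch (q^2) (q^2) k) * (- q / z) ^ k)
      = (z powi (n + int k) * inverse z ^ k) * (q powi ((n + int k)^2) * q ^ k) * (-1) ^ k * inverse (qpoch (q^2) (q^2) k)"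
    unfolding mqk by (simp only: mult_ac)
  also have "\<dots> = z powi n * (q powi (n^2) * q ^ (k * (k - 1)) * ((q^2) powi (n + 1)) ^ k) * (-1) ^ k * inverse (qpoch (q^2) (q^2) k)"
    by (simp only: zz qq)
  also have "\<dots> = z powi n * q powi (n^2) * (ec (q^2) k * ((q^2) powi (n + 1)) ^ k)"
    unfolding ecq by (simp only: mult_ac)
  finally show ?thesis .
qed

lemma norm_q2: fixes q :: complex assumes "norm q < 1" shows "norm (q^2) < 1"
proof -
  have "norm q * norm q \<le> 1 * norm q" using assms by (intro mult_right_mono) auto
  thus ?thesis using assms by (simp add: norm_mult norm_power power2_eq_square)
qed

lemma jtp_half:
  fixes q z :: complex
  assumes q0: "q \<noteq> 0" and q: "norm q < 1" and z0: "z \<noteq> 0" and qz: "norm (q / z) < 1"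
  shows "theta q z = ep (q^2) (q^2) * ep (q^2) (- z * q) * ep (q^2) (- q / z)"
proof -
  define p where "p = q^2"
  have p: "norm p < 1" unfolding p_def by (rule norm_q2[OF q])
  have p0: "p \<noteq> 0" using q0 by (simp add: p_def)
  have mqz: "norm (- q / z) < 1" using qz by simp
  define a where "a = (\<lambda>M::int. z powi M * q powi (M^2))"
  define b where "b = (\<lambda>k. inverse (qpoch p p k) * (- q / z) ^ k)"
  define s where "s = (\<lambda>n::int. z powi n * q powi (n^2) * ep p (p powi (n + 1)))"
  have hs1: "(s has_sum (theta q z * eh p (- q / z))) UNIV"
  proof (rule DS)
    show "(\<lambda>M. norm (a M)) summable_on UNIV" unfolding a_def by (rule theta_abs_summable[OF q])
    show "(\<lambda>k. norm (b k)) summable_on UNIV" unfolding b_def by (rule eh_abs[OF p mqz])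
    show "(a has_sum theta q z) UNIV" unfolding a_def by (rule theta_has_sum[OF q])
    show "(b has_sum eh p (- q / z)) UNIV" unfolding b_def by (rule eh_has_sum[OF p mqz])
    fix n :: int
    have "((\<lambda>k. z powi n * q powi (n^2) * (ec p k * (p powi (n + 1)) ^ k)) has_sum s n) UNIV"
      unfolding s_def by (rule has_sum_cmult_right[OF ep_has_sum[OF p]])
    thus "((\<lambda>k. a (n + int k) * b k) has_sum s n) UNIV"
      unfolding a_def b_def p_def using term_id[OF q0 z0, of n] by (simp add: mult.assoc)
  qed
  have hs2: "(s has_sum (ep p p * ep p (- z * q) + 0)) UNIV"
  proof (rule int_split_has_sum)
    have "((\<lambda>m. ep p p * (ec p m * (- z * q) ^ m)) has_sum ep p p * ep p (- z * q)) UNIV"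
      by (rule has_sum_cmult_right[OF ep_has_sum[OF p]])
    moreover have "s (int m) = ep p p * (ec p m * (- z * q) ^ m)" for m
    proof -
      have qn: "qpoch p p m \<noteq> 0" using p by (intro qpoch_nonzero) auto
      have "qpoch p p m * ep p (p ^ m * p) = ep p p" by (rule ep_iter[OF p])
      hence e1: "ep p (p powi (int m + 1)) = ep p p / qpoch p p m"
        using qn by (simp add: field_simps power_int_add p0 mult.commute)
      have e2: "ec p m * (- z * q) ^ m = z ^ m * q ^ (m * m) / qpoch p p m"
      proof -
        have zq: "- z * q = (-1) * z * q" by simp
        have zqm: "(- z * q) ^ m = (-1) ^ m * z ^ m * q ^ m" by (simp only: zq power_mult_distrib)
        have ecq: "ec p m = (-1)^m * q^(m*(m-1)) * inverse (qpoch p p m)"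
          unfolding p_def by (simp only: ec_def p_tri divide_inverse)
        have "ec p m * (- z * q) ^ m = ((-1)^m * (-1)^m) * z ^ m * (q ^ (m * (m - 1)) * q ^ m) / qpoch p p m"
          unfolding ecq zqm divide_inverse by (simp only: mult_ac)
        also have "(-1::complex)^m * (-1)^m = 1" by (simp flip: power_add)
        also have "q ^ (m * (m - 1)) * q ^ m = q ^ (m * m)"
          by (cases m) (simp_all add: power_add[symmetric] algebra_simps)
        finally show ?thesis by simp
      qed
      have e3: "q powi ((int m)^2) = q ^ (m * m)"
      proof -
        have "(int m)^2 = int (m * m)" by (simp add: power2_eq_square)
        thus ?thesis by (simp only: power_int_of_nat)
      qed
      show ?thesis unfolding s_def e1 e2 e3 by simp
    qed
    ultimately show "((\<lambda>m. s (int m)) has_sum ep p p * ep p (- z * q)) UNIV" by simp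
  next
    show "((\<lambda>m. s (- int m - 1)) has_sum 0) UNIV"
      by (rule has_sum_0) (simp add: s_def ep_negpow_zero[OF p p0])
  qed
  have "theta q z * eh p (- q / z) = ep p p * ep p (- z * q)"
    using has_sum_unique[OF hs1 hs2] by simp
  moreover have "eh p (- q / z) = 1 / ep p (- q / z)" by (rule eh_eq[OF p mqz])
  moreover have "ep p (- q / z) \<noteq> 0" by (rule ep_nonzero[OF p mqz])
  ultimately show ?thesis unfolding p_def by (simp add: field_simps)
qed

lemma theta_inv: fixes q z :: complex shows "theta q (inverse z) = theta q z"
proof -
  have "infsum (\<lambda>M::int. inverse z powi M * q powi (M^2)) UNIV = infsum (\<lambda>M::int. z powi M * q powi (M^2)) UNIV"
    by (rule infsum_reindex_bij_witness[where i = uminus and j = uminus])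
       (auto simp: power_int_minus power_int_inverse)
  thus ?thesis by (simp add: theta_def)
qed

lemma jtp:
  fixes q z :: complex
  assumes q0: "q \<noteq> 0" and q: "norm q < 1" and z0: "z \<noteq> 0"
  shows "theta q z = ep (q^2) (q^2) * ep (q^2) (- z * q) * ep (q^2) (- q / z)"
proof (cases "norm (q / z) < 1")
  case True thus ?thesis using jtp_half[OF q0 q z0] by simp
next
  case False
  hence "norm q \<ge> norm z" using z0 by (simp add: norm_divide divide_le_eq)
  hence "norm (q * z) < 1"
    using q by (simp add: norm_mult) (smt (verit) mult_le_one mult_strict_right_mono norm_ge_zero zero_less_norm_iff z0)
  hence "norm (q / inverse z) < 1" by (simp add: divide_inverse)
  from jtp_half[OF q0 q _ this] z0
  have "theta q (inverse z) = ep (q^2) (q^2) * ep (q^2) (- inverse z * q) * ep (q^2) (- q / inverse z)"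
    by simp
  thus ?thesis by (simp add: theta_inv divide_inverse mult_ac)
qed

lemma qpoch_double: "qpoch a p (2 * N) = qpoch a (p^2) N * qpoch (a * p) (p^2) N"
proof (induction N)
  case 0 show ?case by simp
next
  case (Suc N)
  have "qpoch a p (2 * Suc N) = qpoch a p (2 * N) * (1 - a * p ^ (2 * N)) * (1 - a * p ^ (Suc (2 * N)))"
    by (simp add: qpoch_Suc)
  also have "\<dots> = qpoch a (p^2) (Suc N) * qpoch (a * p) (p^2) (Suc N)"
  proof -
    have e: "(p^2)^N = p^(2*N)" by (simp add: power_mult)
    show ?thesis unfolding Suc.IH by (simp only: qpoch_Suc e power_Suc mult_ac)
  qed
  finally show ?case .
qed

lemma qpoch_pm: "qpoch a p N * qpoch (- a) p N = qpoch (a^2) (p^2) N"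
proof (induction N)
  case 0 show ?case by simp
next
  case (Suc N)
  have "qpoch a p (Suc N) * qpoch (- a) p (Suc N) = (qpoch a p N * qpoch (- a) p N) * ((1 - a * p ^ N) * (1 + a * p ^ N))"
    by (simp add: qpoch_Suc mult_ac)
  also have "(1 - a * p ^ N) * (1 + a * p ^ N) = 1 - a^2 * (p^2) ^ N"
    by (simp add: power2_eq_square power_mult_distrib algebra_simps flip: power_mult)
  finally show ?case using Suc by (simp add: qpoch_Suc)
qed

lemma ep_double: assumes p: "norm p < 1" shows "ep p a = ep (p^2) a * ep (p^2) (a * p)"
proof -
  have p2: "norm (p^2) < 1" by (rule norm_q2[OF p])
  have "(\<lambda>N. qpoch a p (2 * N)) \<longlonglongrightarrow> ep p a"
    using LIMSEQ_subseq_LIMSEQ[OF qpoch_tendsto[OF p], of "\<lambda>N. 2 * N"]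
    by (simp add: strict_mono_def o_def)
  moreover have "(\<lambda>N. qpoch a p (2 * N)) \<longlonglongrightarrow> ep (p^2) a * ep (p^2) (a * p)"
    unfolding qpoch_double by (intro tendsto_intros qpoch_tendsto[OF p2])
  ultimately show ?thesis by (rule LIMSEQ_unique)
qed

lemma ep_pm: assumes p: "norm p < 1" shows "ep p a * ep p (- a) = ep (p^2) (a^2)"
proof -
  have p2: "norm (p^2) < 1" by (rule norm_q2[OF p])
  have "(\<lambda>N. qpoch a p N * qpoch (- a) p N) \<longlonglongrightarrow> ep p a * ep p (- a)"
    by (intro tendsto_intros qpoch_tendsto[OF p])
  moreover have "(\<lambda>N. qpoch a p N * qpoch (- a) p N) \<longlonglongrightarrow> ep (p^2) (a^2)"
    unfolding qpoch_pm by (rule qpoch_tendsto[OF p2])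
  ultimately show ?thesis by (rule LIMSEQ_unique)
qed

lemma euler_odd: fixes x :: complex assumes x: "norm x < 1" shows "ep (x^2) x * ep x (- x) = 1"
proof -
  have x2: "norm (x^2) < 1" by (rule norm_q2[OF x])
  have h1: "ep x x * ep x (- x) = ep (x^2) (x^2)" by (rule ep_pm[OF x])
  have h2: "ep x x = ep (x^2) x * ep (x^2) (x * x)" by (rule ep_double[OF x])
  have xx: "x * x = x^2" by (simp add: power2_eq_square)
  have nz: "ep (x^2) (x^2) \<noteq> 0" by (rule ep_nonzero[OF x2 x2])
  have "ep (x^2) (x^2) * (ep (x^2) x * ep x (- x)) = ep x x * ep x (- x)"
    unfolding h2 xx by (simp only: mult_ac)
  also have "\<dots> = ep (x^2) (x^2) * 1" using h1 by simp
  finally have "ep (x^2) (x^2) * (ep (x^2) x * ep x (- x)) = ep (x^2) (x^2) * 1" .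
  thus ?thesis by (rule mult_left_cancel[THEN iffD1, OF nz])
qed

lemma euler3: fixes q :: complex assumes q: "norm q < 1"
  shows "ep (q^2) q * ep (q^2) (- q) * ep (q^2) (- (q^2)) = 1"
proof -
  have q2: "norm (q^2) < 1" by (rule norm_q2[OF q])
  have h: "ep (q^2) q * ep (q^2) (- q) = ep ((q^2)^2) (q^2)" by (rule ep_pm[OF q2])
  have "ep (q^2) q * ep (q^2) (- q) * ep (q^2) (- (q^2)) = ep ((q^2)^2) (q^2) * ep (q^2) (- (q^2))"
    by (simp only: h)
  also have "\<dots> = 1" by (rule euler_odd[OF q2])
  finally show ?thesis .
qed

lemma inv_qpochZ:
  fixes p a :: complex
  assumes p: "norm p < 1" "p \<noteq> 0" and a: "ep p a \<noteq> 0"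
  shows "1 / qpochZ a p n = ep p (a * p powi n) / ep p a"
proof (cases "n \<ge> 0")
  case True
  then obtain m where n: "n = int m" by (metis nonneg_int_cases)
  have h: "qpoch a p m * ep p (p ^ m * a) = ep p a" by (rule ep_iter[OF p(1)])
  have e2: "ep p (p ^ m * a) \<noteq> 0" using h a by auto
  have qn: "qpoch a p m \<noteq> 0" using h a by auto
  have "ep p (p ^ m * a) / ep p a = ep p (p ^ m * a) / (qpoch a p m * ep p (p ^ m * a))"
    by (simp only: h)
  also have "\<dots> = 1 / qpoch a p m" using e2 by simp
  finally have r: "1 / qpoch a p m = ep p (p ^ m * a) / ep p a" by simp
  have "qpochZ a p n = qpoch a p m" unfolding qpochZ_def n by simp
  moreover have "a * p powi n = p ^ m * a" unfolding n by (simp add: mult.commute)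
  ultimately show ?thesis using r by (simp only:)
next
  case False
  define m where "m = nat (- n)"
  have n: "n = - int m" using False unfolding m_def by simp
  define z where "z = a * p powi n"
  have h: "qpoch z p m * ep p (p ^ m * z) = ep p z" by (rule ep_iter[OF p(1)])
  have pz: "p ^ m * z = a" using p(2) unfolding z_def n by (simp add: power_int_minus)
  have h2: "qpoch z p m * ep p a = ep p z" using h unfolding pz .
  have r: "qpoch z p m = ep p z / ep p a" using h2 a by (simp add: eq_divide_eq)
  have "qpochZ a p n = 1 / qpoch z p m" unfolding qpochZ_def z_def using False n by simp
  thus ?thesis using r z_def by simp
qed

lemma qq_lemma:
  fixes q :: complex and n :: int and k :: nat
  assumes q: "q \<noteq> 0"
  shows "q powi ((n + int k)^2) * q ^ k = q powi (n^2) * q ^ (k * (k - 1)) * ((q^2) powi (n + 1)) ^ k"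
proof -
  have i2: "int (k * (k - 1)) = int k * (int k - 1)" by (cases k) (simp_all add: algebra_simps)
  have r2: "q ^ (k * (k - 1)) = q powi (int k * (int k - 1))"
  proof -
    have "q powi (int k * (int k - 1)) = q powi (int (k * (k - 1)))" by (simp only: i2)
    thus ?thesis by (simp only: power_int_of_nat)
  qed
  have r3: "((q^2) powi (n + 1)) ^ k = q powi (2 * (n + 1) * int k)"
  proof -
    have "(q^2) powi (n+1) = q powi (2*(n+1))" using power_int_power[of q 2 "n+1"] by simp
    hence "((q^2) powi (n + 1)) ^ k = (q powi (2*(n+1))) powi int k" by simp
    also have "\<dots> = q powi (2 * (n + 1) * int k)" by (rule power_int_mult[symmetric])
    finally show ?thesis .
  qed
  have "q powi ((n + int k)^2) * q ^ k = q powi ((n + int k)^2 + int k)"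
    using q by (simp add: powi_comb flip: power_int_of_nat)
  also have "(n + int k)^2 + int k = n^2 + int k * (int k - 1) + 2 * (n + 1) * int k"
    by (simp add: power2_eq_square algebra_simps)
  also have "q powi \<dots> = q powi (n^2) * q powi (int k * (int k - 1)) * q powi (2 * (n + 1) * int k)"
    using q by (simp add: powi_comb)
  finally show ?thesis by (simp only: r2 r3)
qed

lemma term_id2:
  fixes q :: complex and n :: int and k :: nat
  assumes q: "q \<noteq> 0"
  shows "1 powi (n + int k) * q powi ((n + int k)^2) * (inverse (qpoch (q^2) (q^2) k) * q ^ k)
       = q powi (n^2) * (ec (q^2) k * (- ((q^2) powi (n + 1))) ^ k)"
proof -
  have ecq: "ec (q^2) k = (-1)^k * q^(k*(k-1)) * inverse (qpoch (q^2) (q^2) k)"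
    by (simp only: ec_def p_tri divide_inverse)
  have mX: "(- ((q^2) powi (n + 1))) ^ k = (-1) ^ k * ((q^2) powi (n + 1)) ^ k"
    by (rule power_minus)
  have s1: "(-1::complex) ^ k * (-1) ^ k = 1" by (simp flip: power_add)
  have "q powi (n^2) * (ec (q^2) k * (- ((q^2) powi (n + 1))) ^ k)
     = ((-1) ^ k * (-1) ^ k) * (q powi (n^2) * q ^ (k * (k - 1)) * ((q^2) powi (n + 1)) ^ k) * inverse (qpoch (q^2) (q^2) k)"
    unfolding ecq mX by (simp only: mult_ac)
  also have "\<dots> = (q powi ((n + int k)^2) * q ^ k) * inverse (qpoch (q^2) (q^2) k)"
    unfolding s1 qq_lemma[OF q] by simp
  finally show ?thesis by (simp add: mult_ac)
qed

lemma has_sum_even: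
  fixes f :: "int \<Rightarrow> complex"
  assumes "(f has_sum S) UNIV" "\<And>n. odd n \<Longrightarrow> f n = 0"
  shows "((\<lambda>r. f (2 * r)) has_sum S) UNIV"
proof -
  have "(f has_sum S) (range (\<lambda>r::int. 2 * r)) \<longleftrightarrow> (f has_sum S) UNIV"
  proof (rule has_sum_cong_neutral)
    fix x assume "x \<in> UNIV - range (\<lambda>r::int. 2 * r)"
    hence "odd x" by (auto elim!: evenE)
    thus "f x = 0" by (rule assms(2))
  qed auto
  hence "(f has_sum S) (range (\<lambda>r::int. 2 * r))" using assms(1) by simp
  moreover have "inj (\<lambda>r::int. 2 * r)" by (simp add: inj_on_def)
  ultimately show ?thesis using has_sum_reindex[of "\<lambda>r::int. 2 * r" UNIV f S] by (simp add: o_def)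
qed

lemma has_sum_odd:
  fixes f :: "int \<Rightarrow> complex"
  assumes "(f has_sum S) UNIV" "\<And>n. even n \<Longrightarrow> f n = 0"
  shows "((\<lambda>r. f (2 * r + 1)) has_sum S) UNIV"
proof -
  have "(f has_sum S) (range (\<lambda>r::int. 2 * r + 1)) \<longleftrightarrow> (f has_sum S) UNIV"
  proof (rule has_sum_cong_neutral)
    fix x assume x: "x \<in> UNIV - range (\<lambda>r::int. 2 * r + 1)"
    have "even x"
    proof (rule ccontr)
      assume "odd x"
      hence "x = 2 * (x div 2) + 1" by presburger
      hence "x \<in> range (\<lambda>r::int. 2 * r + 1)" by (metis rangeI)
      with x show False by simp
    qed
    thus "f x = 0" by (rule assms(2))
  qed auto
  hence "(f has_sum S) (range (\<lambda>r::int. 2 * r + 1))" using assms(1) by simp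
  moreover have "inj (\<lambda>r::int. 2 * r + 1)" by (simp add: inj_on_def)
  ultimately show ?thesis using has_sum_reindex[of "\<lambda>r::int. 2 * r + 1" UNIV f S] by (simp add: o_def)
qed

lemma G_sum:
  fixes q :: complex
  assumes q0: "q \<noteq> 0" and q: "norm q < 1"
  shows "((\<lambda>n::int. q powi (n^2) / qpochZ (- (q^2)) (q^2) n) has_sum
          (ep (q^2) (q^2) * ep (q^2) (- q) ^ 3)) UNIV"
proof -
  define p where "p = q^2"
  have p: "norm p < 1" unfolding p_def by (rule norm_q2[OF q])
  have p0: "p \<noteq> 0" using q0 by (simp add: p_def)
  have mp: "norm (- p) < 1" using p by simp
  define s where "s = (\<lambda>n::int. q powi (n^2) * ep p (- (p powi (n + 1))))"
  have hs: "(s has_sum (theta q 1 * eh p q)) UNIV"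
  proof (rule DS[where a = "\<lambda>M::int. 1 powi M * q powi (M^2)" and b = "\<lambda>k. inverse (qpoch p p k) * q ^ k"])
    show "(\<lambda>M. norm (1 powi M * q powi (M^2))) summable_on UNIV" by (rule theta_abs_summable[OF q])
    show "(\<lambda>k. norm (inverse (qpoch p p k) * q ^ k)) summable_on UNIV" by (rule eh_abs[OF p q])
    show "((\<lambda>M::int. 1 powi M * q powi (M^2)) has_sum theta q 1) UNIV" by (rule theta_has_sum[OF q])
    show "((\<lambda>k. inverse (qpoch p p k) * q ^ k) has_sum eh p q) UNIV" by (rule eh_has_sum[OF p q])
    fix n :: int
    have "((\<lambda>k. q powi (n^2) * (ec p k * (- (p powi (n + 1))) ^ k)) has_sum s n) UNIV"
      unfolding s_def by (rule has_sum_cmult_right[OF ep_has_sum[OF p]])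
    thus "((\<lambda>k. 1 powi (n + int k) * q powi ((n + int k)^2) * (inverse (qpoch p p k) * q ^ k)) has_sum s n) UNIV"
      unfolding p_def by (simp only: term_id2[OF q0])
  qed
  have "((\<lambda>n. s n * (1 / ep p (- p))) has_sum (theta q 1 * eh p q * (1 / ep p (- p)))) UNIV"
    by (rule has_sum_cmult_left[OF hs])
  moreover have "s n * (1 / ep p (- p)) = q powi (n^2) / qpochZ (- p) p n" for n
  proof -
    have "1 / qpochZ (- p) p n = ep p (- p * p powi n) / ep p (- p)"
      by (rule inv_qpochZ[OF p p0 ep_nonzero[OF p mp]])
    moreover have "- p * p powi n = - (p powi (n + 1))" using p0 by (simp add: power_int_add mult.commute)
    ultimately show ?thesis unfolding s_def by (simp add: divide_inverse mult.assoc)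
  qed
  moreover have "theta q 1 * eh p q * (1 / ep p (- p)) = ep p p * ep p (- q) ^ 3"
  proof -
    have t: "theta q 1 = ep p p * ep p (- q) * ep p (- q)" using jtp[OF q0 q, of 1] unfolding p_def by simp
    have e: "eh p q = 1 / ep p q" by (rule eh_eq[OF p q])
    have u: "ep p q * ep p (- q) * ep p (- p) = 1" unfolding p_def by (rule euler3[OF q])
    have n1: "ep p q \<noteq> 0" and n2: "ep p (- p) \<noteq> 0" using u by auto
    have "theta q 1 * eh p q * (1 / ep p (- p)) = ep p p * ep p (- q) * ep p (- q) / (ep p q * ep p (- p))"
      unfolding t e by simp
    also have "1 / (ep p q * ep p (- p)) = ep p (- q)" using u n1 n2 by (simp add: field_simps mult_ac)
    hence "ep p p * ep p (- q) * ep p (- q) / (ep p q * ep p (- p)) = ep p p * ep p (- q) * ep p (- q) * ep p (- q)"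
      by (metis times_divide_eq_right mult_1_right)
    finally show ?thesis by (simp add: power3_eq_cube mult_ac)
  qed
  ultimately show ?thesis unfolding p_def by simp
qed

lemma part12:
  fixes q :: complex
  assumes q0: "q \<noteq> 0" and q: "norm q < 1"
  shows "((\<lambda>r::int. q powi (4 * r^2) / qpochZ (- (q^2)) (q^2) (2 * r)) has_sum
           (ep (q^2) (q^2) / 2 * ((ep (q^2) q)^3 + (ep (q^2) (- q))^3))) UNIV \<and>
         ((\<lambda>r::int. q powi (4 * r^2 + 4 * r) / qpochZ (- (q^2)) (q^2) (2 * r + 1)) has_sum
           (ep (q^2) (q^2) / (2 * q) * ((ep (q^2) (- q))^3 - (ep (q^2) q)^3))) UNIV"
proof -
  define D where "D = (\<lambda>n. qpochZ (- (q^2)) (q^2) n)"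
  define g where "g = (\<lambda>n::int. q powi (n^2) / D n)"
  define g' where "g' = (\<lambda>n::int. (- q) powi (n^2) / D n)"
  define X where "X = ep (q^2) (q^2) * ep (q^2) (- q) ^ 3"
  define Y where "Y = ep (q^2) (q^2) * ep (q^2) q ^ 3"
  have hg: "(g has_sum X) UNIV" unfolding g_def D_def X_def by (rule G_sum[OF q0 q])
  have mq0: "- q \<noteq> 0" and mq: "norm (- q) < 1" using q0 q by auto
  have e2: "(- q)^2 = q^2" by (rule power2_minus)
  have hg': "(g' has_sum Y) UNIV"
    using G_sum[OF mq0 mq] unfolding g'_def D_def Y_def e2 minus_minus .
  have Ev: "g' n = g n" if "even n" for n
  proof -
    have "even (n^2)" using that by simp
    thus ?thesis unfolding g_def g'_def by simp
  qed
  have Od: "g' n = - g n" if "odd n" for n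
  proof -
    have "odd (n^2)" using that by simp
    thus ?thesis unfolding g_def g'_def by simp
  qed
  have "((\<lambda>n. (g n + g' n) * (1/2)) has_sum ((X + Y) * (1/2))) UNIV"
    by (rule has_sum_cmult_left[OF has_sum_add[OF hg hg']])
  hence H1: "((\<lambda>r. (g (2 * r) + g' (2 * r)) * (1/2)) has_sum ((X + Y) * (1/2))) UNIV"
    by (rule has_sum_even[of "\<lambda>n. (g n + g' n) * (1/2)"]) (simp add: Od)
  have T1: "(g (2 * r) + g' (2 * r)) * (1/2) = q powi (4 * r^2) / qpochZ (- (q^2)) (q^2) (2 * r)" for r
  proof -
    have sq: "(2 * r)^2 = 4 * r^2" by (simp add: power2_eq_square)
    have ev: "g' (2 * r) = g (2 * r)" by (rule Ev) simp
    show ?thesis unfolding ev g_def D_def sq by simp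
  qed
  have V1: "(X + Y) * (1/2) = ep (q^2) (q^2) / 2 * ((ep (q^2) q)^3 + (ep (q^2) (- q))^3)"
    unfolding X_def Y_def by (simp add: algebra_simps)
  have P1: "((\<lambda>r::int. q powi (4 * r^2) / qpochZ (- (q^2)) (q^2) (2 * r)) has_sum
           (ep (q^2) (q^2) / 2 * ((ep (q^2) q)^3 + (ep (q^2) (- q))^3))) UNIV" using H1 unfolding T1 V1 .
  have "((\<lambda>n. (g n - g' n) * (1 / (2 * q))) has_sum ((X - Y) * (1 / (2 * q)))) UNIV"
  proof -
    have "((\<lambda>n. - g' n) has_sum (- Y)) UNIV" using hg' by (simp add: has_sum_uminus)
    from has_sum_add[OF hg this] have "((\<lambda>n. g n - g' n) has_sum (X - Y)) UNIV" by simp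
    thus ?thesis by (rule has_sum_cmult_left)
  qed
  hence H2: "((\<lambda>r. (g (2 * r + 1) - g' (2 * r + 1)) * (1 / (2 * q))) has_sum ((X - Y) * (1 / (2 * q)))) UNIV"
    by (rule has_sum_odd[of "\<lambda>n. (g n - g' n) * (1 / (2 * q))"]) (simp add: Ev)
  have T2: "(g (2 * r + 1) - g' (2 * r + 1)) * (1 / (2 * q)) = q powi (4 * r^2 + 4 * r) / qpochZ (- (q^2)) (q^2) (2 * r + 1)" for r
  proof -
    have o: "odd (2 * r + 1)" by simp
    have e: "(2 * r + 1)^2 = (4 * r^2 + 4 * r) + 1" by (simp add: power2_eq_square algebra_simps)
    have qe: "q powi ((2 * r + 1)^2) = q powi (4 * r^2 + 4 * r) * q" unfolding e using q0 by (simp add: power_int_add)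
    have "(g (2 * r + 1) - g' (2 * r + 1)) * (1 / (2 * q)) = g (2 * r + 1) / q"
      unfolding Od[OF o] using q0 by (simp add: field_simps)
    also have "\<dots> = q powi (4 * r^2 + 4 * r) / qpochZ (- (q^2)) (q^2) (2 * r + 1)"
      unfolding g_def D_def qe using q0 by simp
    finally show ?thesis .
  qed
  have V2: "(X - Y) * (1 / (2 * q)) = ep (q^2) (q^2) / (2 * q) * ((ep (q^2) (- q))^3 - (ep (q^2) q)^3)"
    unfolding X_def Y_def by (simp add: algebra_simps)
  have P2: "((\<lambda>r::int. q powi (4 * r^2 + 4 * r) / qpochZ (- (q^2)) (q^2) (2 * r + 1)) has_sum
           (ep (q^2) (q^2) / (2 * q) * ((ep (q^2) (- q))^3 - (ep (q^2) q)^3))) UNIV" using H2 unfolding T2 V2 .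
  from P1 P2 show ?thesis by blast
qed

lemma range_split_int: "range int \<union> range (\<lambda>n::nat. - int n - 1) = UNIV"
proof (rule set_eqI, rule iffI)
  fix x :: int
  show "x \<in> range int \<union> range (\<lambda>n::nat. - int n - 1)"
  proof (cases "x \<ge> 0")
    case True thus ?thesis by (metis UnI1 nonneg_int_cases rangeI)
  next
    case False
    hence "x = - int (nat (- x - 1)) - 1" by simp
    thus ?thesis by (metis UnI2 rangeI)
  qed
qed simp

lemma int_split_sums:
  fixes f :: "int \<Rightarrow> complex"
  assumes f: "f summable_on UNIV"
  shows "(\<lambda>m. f (int m) + f (- int m - 1)) sums (infsum f UNIV)"
proof -
  define A where "A = infsum f (range int)"
  define B where "B = infsum f (range (\<lambda>n::nat. - int n - 1))"
  have ha: "(f has_sum A) (range int)" unfolding A_def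
    by (rule has_sum_infsum, rule summable_on_subset_banach[OF f]) auto
  have hb: "(f has_sum B) (range (\<lambda>n::nat. - int n - 1))" unfolding B_def
    by (rule has_sum_infsum, rule summable_on_subset_banach[OF f]) auto
  have d: "range int \<inter> range (\<lambda>n::nat. - int n - 1) = {}" by auto
  have "(f has_sum (A + B)) UNIV" using has_sum_Un_disjoint[OF ha hb d] range_split_int by simp
  hence AB: "infsum f UNIV = A + B" by (rule infsumI)
  have i1: "inj (\<lambda>n::nat. int n)" by (simp add: inj_on_def)
  have i2: "inj (\<lambda>n::nat. - int n - 1)" by (simp add: inj_on_def)
  have "((\<lambda>m. f (int m)) has_sum A) UNIV" using ha has_sum_reindex[OF i1, of f A] by (simp add: o_def)
  hence sa: "(\<lambda>m. f (int m)) sums A" by (rule has_sum_imp_sums)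
  have "((\<lambda>m. f (- int m - 1)) has_sum B) UNIV" using hb has_sum_reindex[OF i2, of f B] by (simp add: o_def)
  hence sb: "(\<lambda>m. f (- int m - 1)) sums B" by (rule has_sum_imp_sums)
  show ?thesis unfolding AB by (rule sums_add[OF sa sb])
qed

definition ee :: "nat \<Rightarrow> complex \<Rightarrow> complex" where
  "ee m w = inverse w ^ m * (\<Sum>i<2 * m + 1. w ^ i)"

lemma pair_term:
  fixes Q w :: complex and m :: nat
  assumes Q: "Q \<noteq> 0" and w: "w \<noteq> 0"
  shows "(- Q * w) powi (int m) * Q powi ((int m)^2) + (- Q * w) powi (- int m - 1) * Q powi ((- int m - 1)^2)
       = (-1) ^ m * Q ^ (m * m + m) * (w ^ m - inverse w ^ Suc m)"
proof -
  have a: "(- Q * w) powi (int m) * Q powi ((int m)^2) = (-1) ^ m * Q ^ (m * m + m) * w ^ m"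
  proof -
    have "(int m)^2 = int (m * m)" by (simp add: power2_eq_square)
    hence "(- Q * w) powi (int m) * Q powi ((int m)^2) = (- Q * w) ^ m * Q ^ (m * m)" by (simp only: power_int_of_nat)
    also have "(- Q * w) ^ m = (-1) ^ m * Q ^ m * w ^ m"
    proof -
      have "- Q * w = (-1) * Q * w" by simp
      thus ?thesis by (simp only: power_mult_distrib)
    qed
    finally show ?thesis by (simp add: power_add mult_ac)
  qed
  have b: "(- Q * w) powi (- int m - 1) * Q powi ((- int m - 1)^2) = (-1) ^ m * Q ^ (m * m + m) * (- (inverse w ^ Suc m))"
  proof -
    have sq: "(- int m - 1)^2 = int (Suc m * Suc m)" by (simp add: power2_eq_square algebra_simps)
    have "(- Q * w) powi (- int m - 1) * Q powi ((- int m - 1)^2) = inverse (- Q * w) ^ Suc m * Q ^ (Suc m * Suc m)"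
      by (simp only: sq powi_neg1 power_int_of_nat)
    also have "inverse (- Q * w) = (-1) * inverse Q * inverse w" by (simp add: inverse_mult_distrib)
    also have "((-1) * inverse Q * inverse w) ^ Suc m = (-1) ^ Suc m * inverse Q ^ Suc m * inverse w ^ Suc m"
      by (simp only: power_mult_distrib)
    also have "Q ^ (Suc m * Suc m) = Q ^ Suc m * Q ^ (m * m + m)"
      by (simp add: power_add[symmetric] algebra_simps)
    finally have "(- Q * w) powi (- int m - 1) * Q powi ((- int m - 1)^2)
       = (-1) ^ Suc m * (inverse Q ^ Suc m * Q ^ Suc m) * inverse w ^ Suc m * Q ^ (m * m + m)"
      by (simp only: mult_ac)
    also have "inverse Q ^ Suc m * Q ^ Suc m = 1"
    proof -
      have "inverse Q ^ Suc m * Q ^ Suc m = (inverse Q * Q) ^ Suc m" by (rule power_mult_distrib[symmetric])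
      thus ?thesis using Q by simp
    qed
    finally show ?thesis by simp
  qed
  show ?thesis unfolding a b by (simp add: algebra_simps)
qed

lemma ee_id:
  fixes w :: complex assumes w: "w \<noteq> 0" "w \<noteq> 1"
  shows "(w ^ m - inverse w ^ Suc m) * (w / (w - 1)) = ee m w"
proof -
  have w1: "w - 1 \<noteq> 0" using w by simp
  have g: "(\<Sum>i<2 * m + 1. w ^ i) * (w - 1) = w ^ (2 * m + 1) - 1"
    using power_diff_1_eq[of w "2 * m + 1"] by (metis mult.commute)
  have iw: "inverse w ^ m * w ^ m = 1"
  proof -
    have "inverse w ^ m * w ^ m = (inverse w * w) ^ m" by (rule power_mult_distrib[symmetric])
    thus ?thesis using w by simp
  qed
  have F1: "inverse w ^ m * w ^ (2 * m + 1) = w ^ m * w"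
  proof -
    have "w ^ (2 * m + 1) = w ^ m * w ^ m * w" by (simp add: power_add mult_2)
    hence "inverse w ^ m * w ^ (2 * m + 1) = (inverse w ^ m * w ^ m) * (w ^ m * w)" by (simp only: mult_ac)
    thus ?thesis unfolding iw by simp
  qed
  have F2: "inverse w ^ m = inverse w ^ Suc m * w"
  proof -
    have "inverse w ^ Suc m * w = inverse w ^ m * (inverse w * w)" by (simp only: power_Suc mult_ac)
    thus ?thesis using w by simp
  qed
  have C: "ee m w * (w - 1) = (w ^ m - inverse w ^ Suc m) * w"
  proof -
    have "ee m w * (w - 1) = inverse w ^ m * (w ^ (2 * m + 1) - 1)"
      unfolding ee_def by (simp only: mult.assoc g)
    also have "\<dots> = inverse w ^ m * w ^ (2 * m + 1) - inverse w ^ m" by (simp add: right_diff_distrib)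
    also have "\<dots> = w ^ m * w - inverse w ^ Suc m * w" by (simp only: F1 F2[symmetric])
    also have "\<dots> = (w ^ m - inverse w ^ Suc m) * w" by (simp add: left_diff_distrib)
    finally show ?thesis .
  qed
  have "(w ^ m - inverse w ^ Suc m) * (w / (w - 1)) = ((w ^ m - inverse w ^ Suc m) * w) / (w - 1)"
    by (rule times_divide_eq_right)
  also have "\<dots> = ee m w * (w - 1) / (w - 1)" by (simp only: C)
  also have "\<dots> = ee m w" using w1 by simp
  finally show ?thesis .
qed

lemma sum_pow2_le: "(\<Sum>i<k. (2::real) ^ i) \<le> 2 ^ k"
  by (induction k) simp_all

lemma ee_bound:
  fixes w :: complex assumes w: "w \<in> cball 1 (1/2)"
  shows "norm (ee m w) \<le> 2 * 8 ^ m"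
proof -
  have d: "norm (w - 1) \<le> 1/2" using w by (simp add: dist_norm norm_minus_commute)
  have nw: "norm w \<ge> 1/2" using norm_triangle_ineq2[of 1 "1 - w"] d by (simp add: norm_minus_commute)
  have nw2: "norm w \<le> 2" using norm_triangle_ineq[of "w - 1" 1] d by simp
  have "inverse (norm w) \<le> inverse (1/2::real)" by (rule le_imp_inverse_le[OF nw]) simp
  hence ni: "norm (inverse w) \<le> 2" by (simp add: norm_inverse)
  have "norm (\<Sum>i<2 * m + 1. w ^ i) \<le> (\<Sum>i<2 * m + 1. norm w ^ i)"
    by (rule order_trans[OF norm_sum]) (simp add: norm_power)
  also have "\<dots> \<le> (\<Sum>i<2 * m + 1. (2::real) ^ i)"
    by (intro sum_mono power_mono nw2) simp
  also have "\<dots> \<le> 2 ^ (2 * m + 1)" by (rule sum_pow2_le)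
  finally have s: "norm (\<Sum>i<2 * m + 1. w ^ i) \<le> 2 ^ (2 * m + 1)" .
  have "norm (ee m w) = norm (inverse w) ^ m * norm (\<Sum>i<2 * m + 1. w ^ i)"
    by (simp add: ee_def norm_mult norm_power)
  also have "\<dots> \<le> 2 ^ m * 2 ^ (2 * m + 1)"
    by (intro mult_mono power_mono ni s) simp_all
  also have "\<dots> = 2 * 8 ^ m"
  proof -
    have "(2::real) ^ m * 2 ^ (2 * m + 1) = 2 * (2 ^ m * 2 ^ m * 2 ^ m)"
    proof -
      have e: "2 * m + 1 = Suc (m + m)" by simp
      show ?thesis unfolding e by (simp only: power_Suc power_add mult_ac)
    qed
    also have "(2::real) ^ m * 2 ^ m * 2 ^ m = (2 * 2 * 2) ^ m" by (simp only: power_mult_distrib)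
    finally show ?thesis by simp
  qed
  finally show ?thesis .
qed

lemma ee_cont: "continuous_on (cball 1 (1/2)) (ee m)"
proof -
  have "0 \<notin> cball (1::complex) (1/2)" by simp
  hence "\<forall>w\<in>cball (1::complex) (1/2). w \<noteq> 0" by blast
  thus ?thesis unfolding ee_def[abs_def] by (intro continuous_intros) auto
qed

lemma ee_one: "ee m 1 = of_nat (2 * m + 1)"
  by (simp add: ee_def)

lemma J3:
  fixes x :: complex
  assumes x0: "x \<noteq> 0" and x: "norm x < 1"
  shows "(\<lambda>m. (-1) ^ m * csqrt x ^ (m * m + m) * of_nat (2 * m + 1)) sums (ep x x ^ 3)"
proof -
  define Q where "Q = csqrt x"
  have Q0: "Q \<noteq> 0" using x0 by (simp add: Q_def)
  have QQ: "Q^2 = x" by (simp add: Q_def)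
  have Q: "norm Q < 1" using x by (simp add: Q_def real_sqrt_lt_1_iff)
  define c where "c = (\<lambda>m::nat. (-1) ^ m * Q ^ (m * m + m))"
  define P where "P = (\<lambda>w. ep x x * ep x (x * w) * ep x (x * inverse w))"
  define S where "S = cball (1::complex) (1/2)"
  define M where "M = (\<lambda>m::nat. 2 * (8 ^ m * norm Q ^ (m * m)))"
  have Msum: "summable M" unfolding M_def
    by (intro summable_mult gauss_summable) (use Q in auto)
  have bnd: "norm (c m * ee m w) \<le> M m" if "w \<in> S" for m w
  proof -
    have "norm (c m) = norm Q ^ (m * m) * norm Q ^ m" by (simp add: c_def norm_mult norm_power power_add)
    also have "\<dots> \<le> norm Q ^ (m * m) * 1" using Q by (intro mult_left_mono power_le_one) auto
    finally have nc: "norm (c m) \<le> norm Q ^ (m * m)" by simp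
    have "norm (c m * ee m w) = norm (c m) * norm (ee m w)" by (rule norm_mult)
    also have "\<dots> \<le> norm Q ^ (m * m) * (2 * 8 ^ m)"
      by (intro mult_mono nc ee_bound) (use that in \<open>simp_all add: S_def\<close>)
    finally show ?thesis by (simp add: M_def mult_ac)
  qed
  have ser: "(\<lambda>m. c m * ee m w) sums P w" if w0: "w \<noteq> 0" and w1: "w \<noteq> 1" for w
  proof -
    define f where "f = (\<lambda>n::int. (- Q * w) powi n * Q powi (n^2))"
    have fs: "f summable_on UNIV" unfolding f_def
      by (rule abs_summable_summable, rule theta_abs_summable[OF Q])
    have "(\<lambda>m. f (int m) + f (- int m - 1)) sums (infsum f UNIV)" by (rule int_split_sums[OF fs])
    moreover have "infsum f UNIV = theta Q (- Q * w)" unfolding f_def theta_def ..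
    moreover have "f (int m) + f (- int m - 1) = c m * (w ^ m - inverse w ^ Suc m)" for m
      unfolding f_def c_def by (rule pair_term[OF Q0 w0])
    ultimately have s1: "(\<lambda>m. c m * (w ^ m - inverse w ^ Suc m)) sums theta Q (- Q * w)" by simp
    have "(\<lambda>m. c m * (w ^ m - inverse w ^ Suc m) * (w / (w - 1))) sums (theta Q (- Q * w) * (w / (w - 1)))"
      by (rule sums_mult2[OF s1])
    moreover have "c m * (w ^ m - inverse w ^ Suc m) * (w / (w - 1)) = c m * ee m w" for m
      by (simp only: mult.assoc ee_id[OF w0 w1])
    moreover have "theta Q (- Q * w) * (w / (w - 1)) = P w"
    proof -
      have Qw: "- Q * w \<noteq> 0" using Q0 w0 by simp
      have t: "theta Q (- Q * w) = ep x x * ep x (x * w) * ep x (inverse w)"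
      proof -
        have j: "theta Q (- Q * w) = ep (Q^2) (Q^2) * ep (Q^2) (- (- Q * w) * Q) * ep (Q^2) (- Q / (- Q * w))"
          by (rule jtp[OF Q0 Q Qw])
        have e1: "- (- Q * w) * Q = x * w" by (simp add: QQ[symmetric] power2_eq_square mult_ac)
        have e2: "- Q / (- Q * w) = inverse w" using Q0 by (simp add: field_simps)
        show ?thesis using j unfolding e1 e2 QQ .
      qed
      have fe: "ep x (inverse w) = (1 - inverse w) * ep x (x * inverse w)" by (rule ep_funeq[OF x])
      have one: "(1 - inverse w) * (w / (w - 1)) = 1" using w0 w1 by (simp add: field_simps)
      have "theta Q (- Q * w) * (w / (w - 1)) = ep x x * ep x (x * w) * ep x (x * inverse w) * ((1 - inverse w) * (w / (w - 1)))"
        unfolding t fe by (simp only: mult_ac)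
      also have "\<dots> = P w" unfolding one by (simp add: P_def)
      finally show ?thesis .
    qed
    ultimately show ?thesis by simp
  qed
  define F where "F = (\<lambda>w. suminf (\<lambda>m. c m * ee m w))"
  have ul: "uniform_limit S (\<lambda>n w. \<Sum>i<n. c i * ee i w) F sequentially"
    unfolding F_def by (rule Weierstrass_m_test[OF bnd Msum])
  have Fc: "continuous_on S F"
  proof (rule uniform_limit_theorem[OF _ ul])
    show "\<forall>\<^sub>F n in sequentially. continuous_on S (\<lambda>w. \<Sum>i<n. c i * ee i w)"
      unfolding S_def by (intro always_eventually allI continuous_intros ee_cont)
  qed simp
  have F1: "isCont F 1"
    using continuous_on_interior[OF Fc] by (simp add: S_def)
  have P1: "isCont P 1"
  proof -
    have a: "isCont (\<lambda>w. ep x (x * w)) 1"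
      by (rule isCont_o2[OF _ ep_isCont[OF x]]) (intro continuous_intros)
    have b: "isCont (\<lambda>w. ep x (x * inverse w)) 1"
      by (rule isCont_o2[OF _ ep_isCont[OF x]]) (intro continuous_intros, simp)
    show ?thesis unfolding P_def by (intro continuous_intros a b)
  qed
  have ev: "\<forall>\<^sub>F w in at 1. F w = P w"
  proof -
    have "\<forall>\<^sub>F w in at (1::complex). w \<noteq> 1 \<and> dist w 1 < 1/2"
      unfolding eventually_at by (rule exI[of _ "1/2"]) auto
    thus ?thesis
    proof (rule eventually_mono)
      fix w :: complex assume "w \<noteq> 1 \<and> dist w 1 < 1/2"
      hence w1: "w \<noteq> 1" and w0: "w \<noteq> 0" by (auto simp: dist_norm)
      show "F w = P w" unfolding F_def using ser[OF w0 w1] by (simp add: sums_iff)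
    qed
  qed
  have "(P \<longlongrightarrow> F 1) (at 1)"
    using Lim_transform_eventually[OF isCont_tendsto_compose[OF F1 tendsto_ident_at] ev] by simp
  moreover have "(P \<longlongrightarrow> P 1) (at 1)" using P1 isCont_def by blast
  ultimately have FP: "F 1 = P 1" by (rule tendsto_unique[rotated]) simp
  have P1v: "P 1 = ep x x ^ 3" by (simp add: P_def power3_eq_cube)
  have "summable (\<lambda>m. c m * ee m 1)"
    by (rule summable_comparison_test[OF _ Msum]) (use bnd in \<open>auto simp: S_def\<close>)
  hence "(\<lambda>m. c m * ee m 1) sums F 1" unfolding F_def by (rule summable_sums)
  hence "(\<lambda>m. c m * ee m 1) sums (ep x x ^ 3)" using FP P1v by simp
  thus ?thesis unfolding c_def ee_one Q_def by (simp add: mult_ac)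
qed

lemma three_pow: "real (2 * m + 1) \<le> 3 ^ m"
  by (induction m) auto

lemma J3abs:
  fixes x :: complex assumes x: "norm x < 1"
  shows "summable (\<lambda>m. norm ((-1) ^ m * csqrt x ^ (m * m + m) * of_nat (2 * m + 1)))"
proof (rule summable_comparison_test[OF _ gauss_summable[of "norm (csqrt x)" 3]])
  have Q: "norm (csqrt x) < 1" using x by (simp add: real_sqrt_lt_1_iff)
  show "\<exists>N. \<forall>n\<ge>N. norm (norm ((-1) ^ n * csqrt x ^ (n * n + n) * of_nat (2 * n + 1))) \<le> 3 ^ n * norm (csqrt x) ^ (n * n)"
  proof (intro exI allI impI)
    fix n :: nat
    have nn: "norm ((-1) ^ n * csqrt x ^ (n * n + n) * of_nat (2 * n + 1) :: complex)
        = norm (csqrt x) ^ (n * n) * norm (csqrt x) ^ n * real (2 * n + 1)"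
      by (simp only: norm_mult norm_power norm_of_nat power_add norm_minus_cancel norm_one power_one mult_1_left)
    have "norm (norm ((-1) ^ n * csqrt x ^ (n * n + n) * of_nat (2 * n + 1) :: complex))
        = norm (csqrt x) ^ (n * n) * norm (csqrt x) ^ n * real (2 * n + 1)"
      unfolding real_norm_def abs_norm_cancel nn by simp
    also have "\<dots> \<le> norm (csqrt x) ^ (n * n) * 1 * 3 ^ n"
      using Q by (intro mult_mono mult_left_mono power_le_one three_pow) auto
    finally show "norm (norm ((-1) ^ n * csqrt x ^ (n * n + n) * of_nat (2 * n + 1))) \<le> 3 ^ n * norm (csqrt x) ^ (n * n)"
      by (simp add: mult_ac)
  qed
qed (use x in \<open>auto simp: real_sqrt_lt_1_iff\<close>)

lemma a_pow: fixes x :: complex shows "csqrt x ^ (m * m + m) = x ^ ((m * m + m) div 2)"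
proof -
  have "even (m * m + m)" by simp
  hence "m * m + m = 2 * ((m * m + m) div 2)" by simp
  hence "csqrt x ^ (m * m + m) = (csqrt x ^ 2) ^ ((m * m + m) div 2)" by (metis power_mult)
  thus ?thesis by simp
qed

lemma U_sum:
  fixes x :: complex assumes x0: "x \<noteq> 0" and x: "norm x < 1"
  shows "((\<lambda>M::int. of_int (4 * M + 1) * x powi (2 * M^2 + M)) has_sum ep x x ^ 3) UNIV"
proof -
  define a where "a = (\<lambda>m. (-1) ^ m * csqrt x ^ (m * m + m) * of_nat (2 * m + 1) :: complex)"
  have ha: "(a has_sum ep x x ^ 3) UNIV"
    unfolding a_def by (rule norm_summable_imp_has_sum[OF J3abs[OF x] J3[OF x0 x]])
  define phi where "phi = (\<lambda>n::nat. if even n then int (n div 2) else - int (n div 2) - 1)"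
  define psi where "psi = (\<lambda>M::int. if M \<ge> 0 then nat (2 * M) else nat (- 2 * M - 1))"
  have key: "of_int (4 * phi n + 1) * x powi (2 * (phi n)^2 + phi n) = a n" for n
  proof (cases "even n")
    case True
    then obtain k where n: "n = 2 * k" by (auto elim!: evenE)
    have p: "phi n = int k" unfolding phi_def n by simp
    have e1: "2 * (int k)^2 + int k = int ((n * n + n) div 2)" unfolding n by (simp add: power2_eq_square algebra_simps)
    have e2: "(4 * int k + 1) = int (2 * n + 1)" unfolding n by simp
    show ?thesis unfolding p a_def a_pow e1 e2 using True
      by (simp only: power_int_of_nat of_int_of_nat_eq) (simp add: n)
  next
    case False
    then obtain k where n: "n = 2 * k + 1" by (auto elim!: oddE)
    have p: "phi n = - int k - 1" unfolding phi_def n by simp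
    have e1: "2 * (- int k - 1)^2 + (- int k - 1) = int ((n * n + n) div 2)"
    proof -
      have "(n * n + n) div 2 = 2 * k * k + 3 * k + 1" unfolding n by (simp add: algebra_simps)
      thus ?thesis by (simp add: power2_eq_square algebra_simps)
    qed
    have e2: "(4 * (- int k - 1) + 1) = - int (2 * n + 1)" unfolding n by simp
    show ?thesis unfolding p a_def a_pow e1 e2 using False
      by (simp only: power_int_of_nat of_int_minus of_int_of_nat_eq) (simp add: n algebra_simps)
  qed
  have "(a has_sum ep x x ^ 3) UNIV = ((\<lambda>M::int. of_int (4 * M + 1) * x powi (2 * M^2 + M)) has_sum ep x x ^ 3) UNIV"
  proof (rule has_sum_reindex_bij_witness[where j = phi and i = psi])
    fix n :: nat show "psi (phi n) = n" unfolding phi_def psi_def by (cases "even n") (auto elim!: evenE oddE)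
  next
    fix M :: int show "phi (psi M) = M"
    proof (cases "M \<ge> 0")
      case True
      have h: "psi M = 2 * nat M" unfolding psi_def using True by (simp add: nat_mult_distrib)
      show ?thesis unfolding h phi_def using True by simp
    next
      case False
      have h: "psi M = 2 * nat (- M - 1) + 1" unfolding psi_def using False by (simp; presburger)
      show ?thesis unfolding h phi_def using False by simp
    qed
  next
    fix n :: nat show "of_int (4 * phi n + 1) * x powi (2 * (phi n)^2 + phi n) = a n" by (rule key)
  qed auto
  with ha show ?thesis by simp
qed

lemma has_sum_odd':
  fixes f :: "int \<Rightarrow> complex"
  assumes "(f has_sum S) UNIV" "\<And>n. even n \<Longrightarrow> f n = 0"
  shows "((\<lambda>r. f (- 2 * r - 1)) has_sum S) UNIV"
proof -
  have "(f has_sum S) (range (\<lambda>r::int. - 2 * r - 1)) \<longleftrightarrow> (f has_sum S) UNIV"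
  proof (rule has_sum_cong_neutral)
    fix x assume x: "x \<in> UNIV - range (\<lambda>r::int. - 2 * r - 1)"
    have "even x"
    proof (rule ccontr)
      assume "odd x"
      hence "x = - 2 * ((- x - 1) div 2) - 1" by presburger
      hence "x \<in> range (\<lambda>r::int. - 2 * r - 1)" by (metis rangeI)
      with x show False by simp
    qed
    thus "f x = 0" by (rule assms(2))
  qed auto
  hence "(f has_sum S) (range (\<lambda>r::int. - 2 * r - 1))" using assms(1) by simp
  moreover have "inj (\<lambda>r::int. - 2 * r - 1)" by (simp add: inj_on_def)
  ultimately show ?thesis using has_sum_reindex[of "\<lambda>r::int. - 2 * r - 1" UNIV f S] by (simp add: o_def)
qed

lemma part34:
  fixes q :: complex
  assumes q0: "q \<noteq> 0" and q: "norm q < 1"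
  shows "((\<lambda>r::int. of_int (8 * r + 1) * q powi (8 * r^2 + 2 * r)) has_sum
           ((ep (q^2) (q^2))^3 / 2 * ((ep (q^2) q)^3 + (ep (q^2) (- q))^3))) UNIV \<and>
         ((\<lambda>r::int. of_int (8 * r + 3) * q powi (8 * r^2 + 6 * r)) has_sum
           ((ep (q^2) (q^2))^3 / (2 * q) * ((ep (q^2) (- q))^3 - (ep (q^2) q)^3))) UNIV"
proof -
  define u where "u = (\<lambda>(y::complex) (M::int). of_int (4 * M + 1) * y powi (2 * M^2 + M))"
  define Uq where "Uq = ep q q ^ 3"
  define Um where "Um = ep (- q) (- q) ^ 3"
  have mq0: "- q \<noteq> 0" and mq: "norm (- q) < 1" using q0 q by auto
  have hu: "(u q has_sum Uq) UNIV" unfolding u_def Uq_def by (rule U_sum[OF q0 q])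
  have hu': "(u (- q) has_sum Um) UNIV" unfolding u_def Um_def by (rule U_sum[OF mq0 mq])
  have Ev: "u (- q) M = u q M" if "even M" for M
  proof -
    have "even (2 * M^2 + M)" using that by simp
    thus ?thesis unfolding u_def by simp
  qed
  have Od: "u (- q) M = - u q M" if "odd M" for M
  proof -
    have "odd (2 * M^2 + M)" using that by simp
    thus ?thesis unfolding u_def by simp
  qed
  have vq: "Uq = (ep (q^2) q * ep (q^2) (q^2)) ^ 3"
    using ep_double[OF q, of q] unfolding Uq_def by (simp add: power2_eq_square)
  have vm: "Um = (ep (q^2) (- q) * ep (q^2) (q^2)) ^ 3"
    using ep_double[OF mq, of "- q"] unfolding Um_def by (simp add: power2_eq_square)
  have "((\<lambda>M. (u q M + u (- q) M) * (1/2)) has_sum ((Uq + Um) * (1/2))) UNIV"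
    by (rule has_sum_cmult_left[OF has_sum_add[OF hu hu']])
  hence H1: "((\<lambda>r. (u q (2 * r) + u (- q) (2 * r)) * (1/2)) has_sum ((Uq + Um) * (1/2))) UNIV"
    by (rule has_sum_even[of "\<lambda>M. (u q M + u (- q) M) * (1/2)"]) (simp add: Od)
  have T1: "(u q (2 * r) + u (- q) (2 * r)) * (1/2) = of_int (8 * r + 1) * q powi (8 * r^2 + 2 * r)" for r
  proof -
    have ev: "u (- q) (2 * r) = u q (2 * r)" by (rule Ev) simp
    have e1: "2 * (2 * r)^2 + 2 * r = 8 * r^2 + 2 * r" by (simp add: power2_eq_square)
    have e2: "4 * (2 * r) + 1 = 8 * r + 1" by simp
    show ?thesis unfolding ev u_def e1 e2 by simp
  qed
  have V1: "(Uq + Um) * (1/2) = (ep (q^2) (q^2))^3 / 2 * ((ep (q^2) q)^3 + (ep (q^2) (- q))^3)"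
    unfolding vq vm by (simp add: power_mult_distrib algebra_simps)
  have P1: "((\<lambda>r::int. of_int (8 * r + 1) * q powi (8 * r^2 + 2 * r)) has_sum
           ((ep (q^2) (q^2))^3 / 2 * ((ep (q^2) q)^3 + (ep (q^2) (- q))^3))) UNIV"
    using H1 unfolding T1 V1 .
  have "((\<lambda>M. (u (- q) M - u q M) * (1 / (2 * q))) has_sum ((Um - Uq) * (1 / (2 * q)))) UNIV"
  proof -
    have "((\<lambda>n. - u q n) has_sum (- Uq)) UNIV" using hu by (simp add: has_sum_uminus)
    from has_sum_add[OF hu' this] have "((\<lambda>n. u (- q) n - u q n) has_sum (Um - Uq)) UNIV" by simp
    thus ?thesis by (rule has_sum_cmult_left)
  qed
  hence H2: "((\<lambda>r. (u (- q) (- 2 * r - 1) - u q (- 2 * r - 1)) * (1 / (2 * q))) has_sum ((Um - Uq) * (1 / (2 * q)))) UNIV"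
    by (rule has_sum_odd'[of "\<lambda>M. (u (- q) M - u q M) * (1 / (2 * q))"]) (simp add: Ev)
  have T2: "(u (- q) (- 2 * r - 1) - u q (- 2 * r - 1)) * (1 / (2 * q)) = of_int (8 * r + 3) * q powi (8 * r^2 + 6 * r)" for r
  proof -
    have o: "odd (- 2 * r - 1)" by presburger
    have e1: "2 * (- 2 * r - 1)^2 + (- 2 * r - 1) = (8 * r^2 + 6 * r) + 1" by (simp add: power2_eq_square algebra_simps)
    have e2: "4 * (- 2 * r - 1) + 1 = - (8 * r + 3)" by simp
    have qe: "q powi ((8 * r^2 + 6 * r) + 1) = q powi (8 * r^2 + 6 * r) * q" using q0 by (simp add: power_int_add)
    have "(u (- q) (- 2 * r - 1) - u q (- 2 * r - 1)) * (1 / (2 * q)) = - u q (- 2 * r - 1) / q"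
      unfolding Od[OF o] using q0 by (simp add: field_simps)
    also have "\<dots> = of_int (8 * r + 3) * q powi (8 * r^2 + 6 * r)"
      unfolding u_def e1 e2 qe using q0 by (simp del: of_int_add of_int_mult add: mult.assoc[symmetric]) (simp add: algebra_simps)
    finally show ?thesis .
  qed
  have V2: "(Um - Uq) * (1 / (2 * q)) = (ep (q^2) (q^2))^3 / (2 * q) * ((ep (q^2) (- q))^3 - (ep (q^2) q)^3)"
    unfolding vq vm by (simp add: power_mult_distrib algebra_simps)
  have P2: "((\<lambda>r::int. of_int (8 * r + 3) * q powi (8 * r^2 + 6 * r)) has_sum
           ((ep (q^2) (q^2))^3 / (2 * q) * ((ep (q^2) (- q))^3 - (ep (q^2) q)^3))) UNIV"
    using H2 unfolding T2 V2 .
  from P1 P2 show ?thesis by blast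
qed

theorem mainTheorem15:
  fixes q :: complex
  assumes "norm q < 1" and "q \<noteq> 0"
  shows "((\<lambda>r::int. q powi (4 * r^2) / qpochZ (- (q^2)) (q^2) (2 * r)) has_sum
           (qpoch_inf (q^2) (q^2) / 2 *
             ((qpoch_inf q (q^2))^3 + (qpoch_inf (- q) (q^2))^3))) UNIV \<and>
         ((\<lambda>r::int. q powi (4 * r^2 + 4 * r) / qpochZ (- (q^2)) (q^2) (2 * r + 1)) has_sum
           (qpoch_inf (q^2) (q^2) / (2 * q) *
             ((qpoch_inf (- q) (q^2))^3 - (qpoch_inf q (q^2))^3))) UNIV \<and>
         ((\<lambda>r::int. of_int (8 * r + 1) * q powi (8 * r^2 + 2 * r)) has_sum
           ((qpoch_inf (q^2) (q^2))^3 / 2 *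
             ((qpoch_inf q (q^2))^3 + (qpoch_inf (- q) (q^2))^3))) UNIV \<and>
         ((\<lambda>r::int. of_int (8 * r + 3) * q powi (8 * r^2 + 6 * r)) has_sum
           ((qpoch_inf (q^2) (q^2))^3 / (2 * q) *
             ((qpoch_inf (- q) (q^2))^3 - (qpoch_inf q (q^2))^3))) UNIV"
proof -
  have p: "norm (q^2) < 1" by (rule norm_q2[OF assms(1)])
  have e: "qpoch_inf a (q^2) = ep (q^2) a" for a by (rule qpoch_inf_ep[OF p])
  show ?thesis unfolding e using part12[OF assms(2,1)] part34[OF assms(2,1)] by blast
qed

end
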